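(* Let $0<L<\infty$, $\varphi\in(0,1)$, and $\kappa_f,\kappa_s,h_v,c_{p,f},\dot m_c,A_c,R,\mu_f,K_D,K_F,p_{HG}>0$, $T_b>0$, $q_{HG}>0$. Let $(T_f,T_s)$ be the unique solution on $[0,L]$ of $$-\varphi\kappa_fT_f''+c_{p,f}\frac{\dot m_c}{A_c}T_f'=h_v(T_s-T_f),\qquad (1-\varphi)\kappa_sT_s''=h_v(T_s-T_f)\quad\text{on }(0,L),$$ $$T_f(0)=T_s(0)=T_b,\quad (1-\varphi)\kappa_sT_s'(L)=q_{HG}-c_{p,f}\frac{\dot m_c}{A_c}(T_s(L)-T_f(L)),\quad T_f'(L)=\frac{h_vA_c}{c_{p,f}\dot m_c}(T_s(L)-T_f(L)),$$ and assume $\frac{p_{HG}}{R\,T_f(L)}>\frac{\dot m_c}{\varphi A_c}\frac{1}{\sqrt{R\,T_b}}$. Let $\rho_f$ be the unique solution on $[0,L]$ of $\rho_f'(y)=\overline N(y,\rho_f(y))\rho_f(y)$, $\rho_f(L)=\frac{p_{HG}}{R\,T_f(L)}$, where $$\overline N(y,\rho)=\frac{R\,(c_{p,f}\dot m_c)^{-1}h_vA_c\,\rho^2\,(T_s(y)-T_f(y))+\frac{\dot m_c}{A_c}\Big(\frac{\mu_f}{K_D}+\frac{\dot m_c}{K_FA_c}\Big)}{\varphi^{-2}\big(\frac{\dot m_c}{A_c}\big)^2-R\,T_f(y)\,\rho^2},$$ and define the velocity $v(y)=\frac{\dot m_c}{A_c\,\rho_f(y)}$, $y\in[0,L]$. Then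 $v$ is positive and strictly monotonically increasing on $[0,L]$.
   Context: $v$ is the Darcy velocity of the coolant, determined from the constant mass flux $\rho_f v=\dot m_c/A_c$. *)

theory Defs
  imports "HOL-Analysis.Analysis"
begin

definition Nbar ::
  "real \<Rightarrow> real \<Rightarrow> real \<Rightarrow> real \<Rightarrow> real \<Rightarrow> real \<Rightarrow> real \<Rightarrow> real \<Rightarrow> real \<Rightarrow>
   (real \<Rightarrow> real) \<Rightarrow> (real \<Rightarrow> real) \<Rightarrow> real \<Rightarrow> real \<Rightarrow> real" where
  "Nbar R cpf mc hv Ac \<phi> muf KD KF Tf Ts y \<rho> =
     (R * inverse (cpf * mc) * hv * Ac * \<rho>^2 * (Ts y - Tf y)
        + (mc / Ac) * (muf / KD + mc / (KF * Ac)))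
     / (inverse (\<phi>^2) * (mc / Ac)^2 - R * Tf y * \<rho>^2)"

definition velocity :: "real \<Rightarrow> real \<Rightarrow> (real \<Rightarrow> real) \<Rightarrow> real \<Rightarrow> real" where
  "velocity mc Ac \<rho>f y = mc / (Ac * \<rho>f y)"

end

theory Submission imports Defs begin
lemma endpt_bound:
  fixes f :: "real \<Rightarrow> real"
  assumes "0 < L" "(f has_real_derivative D) (at L within {0..L})" "c < L"
    "\<And>y. c < y \<Longrightarrow> y < L \<Longrightarrow> (f y - f L) / (y - L) \<le> K"
  shows "D \<le> K"
proof -
  have "((\<lambda>y. (f y - f L) / (y - L)) \<longlongrightarrow> D) (at_left L)"
    using assms(2) at_within_Icc_at_left[OF assms(1)] by (simp add: has_field_derivative_iff)
  moreover have "\<forall>\<^sub>F y in at_left L. (f y - f L) / (y - L) \<le> K"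
    using eventually_at_left_real[OF assms(3)] by eventually_elim (use assms(4) in auto)
  ultimately show ?thesis by (rule tendsto_upperbound) (rule trivial_limit_at_left_real)
qed

lemma interior_deriv:
  fixes f :: "real \<Rightarrow> real"
  assumes "(f has_real_derivative D) (at y within {0..L})" "y \<in> {0<..<L}"
  shows "(f has_real_derivative D) (at y)"
proof -
  have "(f has_real_derivative D) (at y within {0<..<L})"
    by (rule DERIV_subset[OF assms(1)]) auto
  thus ?thesis using at_within_open[of y "{0<..<L}"] assms(2) by simp
qed

lemma mvt_at:
  fixes f :: "real \<Rightarrow> real"
  assumes "a < b" "continuous_on {a..b} f" "\<And>x. a < x \<Longrightarrow> x < b \<Longrightarrow> (f has_real_derivative f' x) (at x)"
  shows "\<exists>z. a < z \<and> z < b \<and> f b - f a = (b - a) * f' z"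
proof -
  obtain l z where "a < z" "z < b" "(f has_real_derivative l) (at z)" "f b - f a = (b - a) * l"
    using MVT[OF assms(1,2)] assms(3) by (meson real_differentiable_def)
  moreover have "l = f' z" using DERIV_unique calculation assms(3) by blast
  ultimately show ?thesis by auto
qed

lemma cont_of_deriv:
  fixes f :: "real \<Rightarrow> real"
  assumes "\<And>y. y \<in> S \<Longrightarrow> (f has_real_derivative f' y) (at y within S)"
  shows "continuous_on S f"
  unfolding continuous_on_eq_continuous_within
  using assms has_derivative_continuous has_field_derivative_def by blast

theorem proposition4:
  fixes L \<phi> \<kappa>f \<kappa>s hv cpf mc Ac R muf KD KF pHG Tb qHG :: real
    and Tf Tf' Tf'' Ts Ts' Ts'' \<rho>f :: "real \<Rightarrow> real"
  assumes L: "0 < L"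
    and phi: "0 < \<phi>" "\<phi> < 1"
    and pos: "0 < \<kappa>f" "0 < \<kappa>s" "0 < hv" "0 < cpf" "0 < mc" "0 < Ac" "0 < R"
             "0 < muf" "0 < KD" "0 < KF" "0 < pHG" "0 < Tb" "0 < qHG"
    \<comment> \<open>(Tf, Ts) is a classical solution of the heat problem on [0,L]\<close>
    and dTf: "\<And>y. y \<in> {0..L} \<Longrightarrow> (Tf has_real_derivative Tf' y) (at y within {0..L})"
    and dTs: "\<And>y. y \<in> {0..L} \<Longrightarrow> (Ts has_real_derivative Ts' y) (at y within {0..L})"
    and ddTf: "\<And>y. y \<in> {0<..<L} \<Longrightarrow> (Tf' has_real_derivative Tf'' y) (at y)"
    and ddTs: "\<And>y. y \<in> {0<..<L} \<Longrightarrow> (Ts' has_real_derivative Ts'' y) (at y)"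
    and odeTf: "\<And>y. y \<in> {0<..<L} \<Longrightarrow>
       - \<phi> * \<kappa>f * Tf'' y + cpf * (mc / Ac) * Tf' y = hv * (Ts y - Tf y)"
    and odeTs: "\<And>y. y \<in> {0<..<L} \<Longrightarrow>
       (1 - \<phi>) * \<kappa>s * Ts'' y = hv * (Ts y - Tf y)"
    and bc0: "Tf 0 = Tb" "Ts 0 = Tb"
    and bcL1: "(1 - \<phi>) * \<kappa>s * Ts' L = qHG - cpf * (mc / Ac) * (Ts L - Tf L)"
    and bcL2: "Tf' L = hv * Ac / (cpf * mc) * (Ts L - Tf L)"
    and hyp: "pHG / (R * Tf L) > mc / (\<phi> * Ac) * (1 / sqrt (R * Tb))"
    \<comment> \<open>\<rho>f solves the density ODE on [0,L] with terminal condition\<close>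
    and d\<rho>: "\<And>y. y \<in> {0..L} \<Longrightarrow>
       (\<rho>f has_real_derivative (Nbar R cpf mc hv Ac \<phi> muf KD KF Tf Ts y (\<rho>f y) * \<rho>f y))
         (at y within {0..L})"
    and \<rho>L: "\<rho>f L = pHG / (R * Tf L)"
  shows "(\<forall>y\<in>{0..L}. 0 < velocity mc Ac \<rho>f y) \<and> strict_mono_on {0..L} (velocity mc Ac \<rho>f)"
proof -
  define al where "al = (1 - \<phi>) * \<kappa>s"
  define be where "be = \<phi> * \<kappa>f"
  define a where "a = cpf * (mc / Ac)"
  define w where "w = (\<lambda>y. Ts y - Tf y)"
  have al: "al > 0" using phi pos by (simp add: al_def)
  have be: "be > 0" using phi pos by (simp add: be_def)
  have a: "a > 0" using pos by (simp add: a_def)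
  have ha: "hv * Ac / (cpf * mc) = hv / a" using pos by (simp add: a_def field_simps)
  have cTf: "continuous_on {0..L} Tf" by (rule cont_of_deriv[OF dTf])
  have cTs: "continuous_on {0..L} Ts" by (rule cont_of_deriv[OF dTs])
  have cw: "continuous_on {0..L} w" unfolding w_def by (intro continuous_intros cTf cTs)
  have dTfi: "\<And>y. y \<in> {0<..<L} \<Longrightarrow> (Tf has_real_derivative Tf' y) (at y)"
    by (rule interior_deriv[OF dTf]) auto
  have dTsi: "\<And>y. y \<in> {0<..<L} \<Longrightarrow> (Ts has_real_derivative Ts' y) (at y)"
    by (rule interior_deriv[OF dTs]) auto
  have dwi: "\<And>y. y \<in> {0<..<L} \<Longrightarrow> (w has_real_derivative (Ts' y - Tf' y)) (at y)"
    unfolding w_def by (intro derivative_intros dTfi dTsi)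
  have ddw: "\<And>y. y \<in> {0<..<L} \<Longrightarrow> ((\<lambda>y. Ts' y - Tf' y) has_real_derivative (Ts'' y - Tf'' y)) (at y)"
    by (intro derivative_intros ddTf ddTs)
  have Tf''eq: "\<And>y. y \<in> {0<..<L} \<Longrightarrow> be * Tf'' y = a * Tf' y - hv * w y"
    using odeTf unfolding be_def a_def w_def by (simp add: algebra_simps)
  have Ts''eq: "\<And>y. y \<in> {0<..<L} \<Longrightarrow> al * Ts'' y = hv * w y"
    using odeTs unfolding al_def w_def by simp
  have ulem: "hv / a * m \<le> Tf' y0" if y0: "y0 \<in> {0<..<L}" and mw: "\<forall>y\<in>{0..L}. m \<le> w y" for y0 m
  proof (rule ccontr)
    assume neg: "\<not> hv / a * m \<le> Tf' y0"
    define g where "g = (\<lambda>y. exp (-(a/be) * y) * (Tf' y - hv / a * m))"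
    have dg: "(g has_real_derivative exp (-(a/be) * x) * (hv / be * (m - w x))) (at x)"
      if x: "x \<in> {0<..<L}" for x
    proof -
      have "(g has_real_derivative exp (-(a/be) * x) * (-(a/be)) * (Tf' x - hv / a * m)
              + exp (-(a/be) * x) * Tf'' x) (at x)"
        unfolding g_def using be by (auto intro!: derivative_eq_intros ddTf x)
      moreover have "exp (-(a/be) * x) * (-(a/be)) * (Tf' x - hv / a * m)
              + exp (-(a/be) * x) * Tf'' x = exp (-(a/be) * x) * (hv / be * (m - w x))"
      proof -
        define E where "E = exp (-(a/be) * x)"
        have h: "E * (be * Tf'' x) = E * (a * Tf' x - hv * w x)" using Tf''eq[OF x] by simp
        have "E * (-(a/be)) * (Tf' x - hv / a * m) + E * Tf'' x = E * (hv / be * (m - w x))"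
          using a be h by (simp add: field_simps) (drule arg_cong[where f="\<lambda>t. a*be*t"], simp add: algebra_simps)
        thus ?thesis by (simp add: E_def)
      qed
      ultimately show ?thesis by simp
    qed
    have gmono: "g y \<le> g y0" if "y0 \<le> y" "y < L" for y
    proof (rule DERIV_nonpos_imp_nonincreasing[OF that(1)])
      fix x assume "y0 \<le> x" "x \<le> y"
      hence x: "x \<in> {0<..<L}" using y0 that by auto
      have "m - w x \<le> 0" using mw x by auto
      hence np: "hv / be * (m - w x) \<le> 0" using pos be
        by (intro mult_nonneg_nonpos) auto
      thus "\<exists>d. (g has_real_derivative d) (at x) \<and> d \<le> 0"
        using dg[OF x] mult_nonneg_nonpos[OF exp_ge_zero[of "-(a/be) * x"] np] by blast
    qed
    have ule: "Tf' y \<le> Tf' y0" if "y0 \<le> y" "y < L" for y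
    proof -
      have g0: "g y0 < 0" using neg by (simp add: g_def mult_pos_neg)
      have "Tf' y - hv / a * m = exp ((a/be) * y) * g y"
        by (simp add: g_def exp_minus field_simps)
      also have "\<dots> \<le> exp ((a/be) * y) * g y0" using gmono[OF that] by (intro mult_left_mono) auto
      also have "\<dots> \<le> exp ((a/be) * y0) * g y0"
      proof (rule mult_right_mono_neg)
        have "(a/be) * y0 \<le> (a/be) * y" using that a be by (intro mult_left_mono) auto
        thus "exp ((a/be) * y0) \<le> exp ((a/be) * y)" by simp
      qed (use g0 in simp)
      also have "\<dots> = Tf' y0 - hv / a * m" by (simp add: g_def exp_minus field_simps)
      finally show ?thesis by simp
    qed
    have "Tf' L \<le> Tf' y0"
    proof (rule endpt_bound[OF L dTf])
      show "L \<in> {0..L}" using L by simp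
      show "y0 < L" using y0 by simp
      fix y assume y: "y0 < y" "y < L"
      have "continuous_on {y..L} Tf" using cTf y y0 by (elim continuous_on_subset) auto
      moreover have "\<And>x. y < x \<Longrightarrow> x < L \<Longrightarrow> (Tf has_real_derivative Tf' x) (at x)"
        using dTfi y0 y by simp
      ultimately obtain z where z: "y < z" "z < L" "Tf L - Tf y = (L - y) * Tf' z"
        using mvt_at[of y L Tf Tf'] y by blast
      have "Tf' z \<le> Tf' y0" using ule z y by simp
      moreover have "(Tf y - Tf L) / (y - L) = Tf' z"
      proof -
        have "(Tf y - Tf L) / (y - L) = (Tf L - Tf y) / (L - y)"
          by (metis minus_diff_eq minus_divide_divide)
        also have "\<dots> = Tf' z" using z(3) y by simp
        finally show ?thesis .
      qed
      ultimately show "(Tf y - Tf L) / (y - L) \<le> Tf' y0" by simp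
    qed
    moreover have "hv / a * m \<le> Tf' L"
    proof -
      have "m \<le> w L" using mw L by simp
      hence "hv / a * m \<le> hv / a * w L" using pos a by (intro mult_left_mono) auto
      thus ?thesis using bcL2 ha by (simp add: w_def)
    qed
    ultimately show False using neg by simp
  qed
  have dw: "\<And>y. y \<in> {0..L} \<Longrightarrow> (w has_real_derivative (Ts' y - Tf' y)) (at y within {0..L})"
    unfolding w_def by (intro derivative_intros dTf dTs)
  have w0: "w 0 = 0" using bc0 by (simp add: w_def)
  have wnn: "\<forall>y\<in>{0..L}. 0 \<le> w y"
  proof (rule ccontr)
    assume "\<not> (\<forall>y\<in>{0..L}. 0 \<le> w y)"
    then obtain y1 where y1: "y1 \<in> {0..L}" "w y1 < 0" by auto
    obtain y0 where y0: "y0 \<in> {0..L}" and ymin: "\<forall>y\<in>{0..L}. w y0 \<le> w y"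
      using continuous_attains_inf[OF compact_Icc _ cw] L by auto
    define m where "m = w y0"
    have m: "m < 0" using y1 ymin m_def by force
    have mw: "\<forall>y\<in>{0..L}. m \<le> w y" using ymin m_def by simp
    have "y0 \<noteq> 0" using m m_def w0 by auto
    moreover have "y0 \<noteq> L"
    proof
      assume yL: "y0 = L"
      have le0: "Ts' L - Tf' L \<le> 0"
      proof (rule endpt_bound[OF L dw])
        show "L \<in> {0..L}" using L by simp
        show "0 < L" by (rule L)
        fix y assume y: "0 < y" "y < L"
        have "w L \<le> w y" using ymin yL y by simp
        thus "(w y - w L) / (y - L) \<le> 0" using y by (intro divide_nonneg_neg) auto
      qed
      have "al * Ts' L = qHG - a * m" using bcL1 yL m_def by (simp add: al_def a_def w_def)
      moreover have "a * m < 0" using a m by (simp add: mult_pos_neg)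
      ultimately have "al * Ts' L > 0" using pos by simp
      hence "Ts' L > 0" using al by (simp add: zero_less_mult_iff)
      moreover note le0
      moreover have "Tf' L < 0"
      proof -
        have "hv / a * m < 0" using m pos a by (intro mult_pos_neg) auto
        thus ?thesis using bcL2 ha yL m_def by (simp add: w_def)
      qed
      ultimately show False by simp
    qed
    ultimately have y0i: "y0 \<in> {0<..<L}" using y0 by auto
    have dw0: "Ts' y0 - Tf' y0 = 0"
    proof (rule DERIV_local_min[OF dwi[OF y0i]])
      show "0 < min y0 (L - y0)" using y0i by simp
      show "\<forall>y. \<bar>y0 - y\<bar> < min y0 (L - y0) \<longrightarrow> w y0 \<le> w y"
        using ymin by (auto simp: abs_if split: if_splits)
    qed
    have dd: "0 \<le> Ts'' y0 - Tf'' y0"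
    proof (rule ccontr)
      assume "\<not> 0 \<le> Ts'' y0 - Tf'' y0"
      hence "Ts'' y0 - Tf'' y0 < 0" by simp
      from DERIV_neg_dec_left[OF ddw[OF y0i] this] obtain d where d: "d > 0"
        and dh: "\<And>h. h > 0 \<Longrightarrow> h < d \<Longrightarrow> Ts' y0 - Tf' y0 < Ts' (y0 - h) - Tf' (y0 - h)" by auto
      define t where "t = y0 - min d y0 / 2"
      have t: "0 < t" "t < y0" using d y0i by (auto simp: t_def)
      have "continuous_on {t..y0} w" using cw t y0 by (elim continuous_on_subset) auto
      moreover have "\<And>x. t < x \<Longrightarrow> x < y0 \<Longrightarrow> (w has_real_derivative (Ts' x - Tf' x)) (at x)"
        using dwi y0i t by simp
      ultimately obtain z where z: "t < z" "z < y0" "w y0 - w t = (y0 - t) * (Ts' z - Tf' z)"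
        using mvt_at[of t y0 w "\<lambda>x. Ts' x - Tf' x"] t by blast
      have "Ts' z - Tf' z > 0" using dh[of "y0 - z"] z dw0 d t_def by auto
      hence "w y0 - w t > 0" using z t by simp
      moreover have "w y0 \<le> w t" using ymin t y0i by simp
      ultimately show False by simp
    qed
    have u: "hv / a * m \<le> Tf' y0" by (rule ulem[OF y0i mw])
    have "al * Ts'' y0 = hv * m" using Ts''eq[OF y0i] m_def by simp
    hence e1: "Ts'' y0 = hv * m / al" using al by (simp add: field_simps)
    have "be * Tf'' y0 = a * Tf' y0 - hv * m" using Tf''eq[OF y0i] m_def by simp
    hence e2: "Tf'' y0 = (a * Tf' y0 - hv * m) / be" using be by (simp add: field_simps)
    have "(a * Tf' y0 - hv * m) / be \<le> hv * m / al" using dd e1 e2 by simp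
    hence "a * Tf' y0 - hv * m \<le> be * (hv * m / al)" using be by (simp add: field_simps)
    moreover have "hv * m \<le> a * Tf' y0" using u a by (simp add: field_simps)
    ultimately have "0 \<le> be * (hv * m / al)" by simp
    moreover have "be * (hv * m / al) < 0" using be al pos m
      by (intro mult_pos_neg divide_neg_pos mult_pos_neg) auto
    ultimately show False by simp
  qed
  have Tfge: "\<forall>y\<in>{0..L}. Tb \<le> Tf y"
  proof
    fix y assume y: "y \<in> {0..L}"
    show "Tb \<le> Tf y"
    proof (cases "y = 0")
      case True thus ?thesis using bc0 by simp
    next
      case False
      hence y': "0 < y" using y by simp
      have "continuous_on {0..y} Tf" using cTf y by (elim continuous_on_subset) auto
      moreover have "\<And>x. 0 < x \<Longrightarrow> x < y \<Longrightarrow> (Tf has_real_derivative Tf' x) (at x)"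
        using dTfi y by simp
      ultimately obtain z where z: "0 < z" "z < y" "Tf y - Tf 0 = (y - 0) * Tf' z"
        using mvt_at[of 0 y Tf Tf'] y' by blast
      have "hv / a * 0 \<le> Tf' z" using ulem[of z 0] z y wnn by simp
      hence "0 \<le> (y - 0) * Tf' z" using y' by simp
      thus ?thesis using z bc0 by simp
    qed
  qed
  define c0 where "c0 = mc / (\<phi> * Ac) * (1 / sqrt (R * Tb))"
  have c0: "0 < c0" using pos phi by (simp add: c0_def)
  have c0sq: "c0^2 * (R * Tb) = inverse (\<phi>^2) * (mc / Ac)^2"
    using pos phi by (simp add: c0_def power_divide power_mult_distrib field_simps)
  let ?N = "\<lambda>y. Nbar R cpf mc hv Ac \<phi> muf KD KF Tf Ts y (\<rho>f y) * \<rho>f y"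
  have key: "?N y < 0" if y: "y \<in> {0..L}" and r: "c0 < \<rho>f y" for y
  proof -
    define r where "r = \<rho>f y"
    have r0: "0 < r" using c0 r r_def by simp
    have n1: "0 \<le> R * inverse (cpf * mc) * hv * Ac * r^2 * (Ts y - Tf y)"
      using pos wnn y by (simp add: w_def)
    have n2: "0 < (mc / Ac) * (muf / KD + mc / (KF * Ac))" using pos by (intro mult_pos_pos add_pos_pos divide_pos_pos) auto
    have sq: "c0^2 < r^2" using c0 r r_def by (simp add: power_strict_mono)
    have "R * Tb * c0^2 < R * Tb * r^2" using sq pos by simp
    also have "\<dots> \<le> R * Tf y * r^2"
      using Tfge y pos by (intro mult_right_mono mult_left_mono) auto
    finally have "inverse (\<phi>^2) * (mc / Ac)^2 - R * Tf y * r^2 < 0" using c0sq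
      by (simp add: mult.commute)
    moreover have "0 < R * inverse (cpf * mc) * hv * Ac * r^2 * (Ts y - Tf y)
        + (mc / Ac) * (muf / KD + mc / (KF * Ac))" using n1 n2 by linarith
    ultimately have "Nbar R cpf mc hv Ac \<phi> muf KD KF Tf Ts y r < 0"
      unfolding Nbar_def by (rule divide_pos_neg[rotated])
    thus ?thesis using r0 r_def by (simp add: mult_neg_pos)
  qed
  have c\<rho>: "continuous_on {0..L} \<rho>f" by (rule cont_of_deriv[OF d\<rho>])
  have d\<rho>i: "\<And>y. y \<in> {0<..<L} \<Longrightarrow> (\<rho>f has_real_derivative ?N y) (at y)"
    by (rule interior_deriv[OF d\<rho>]) auto
  have \<rho>Lc: "c0 < \<rho>f L" using \<rho>L hyp by (simp add: c0_def)
  have gt: "\<forall>y\<in>{0..L}. c0 < \<rho>f y"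
  proof (rule ccontr)
    assume "\<not> (\<forall>y\<in>{0..L}. c0 < \<rho>f y)"
    then obtain y1 where y1: "y1 \<in> {0..L}" "\<rho>f y1 \<le> c0" by force
    define S where "S = {0..L} \<inter> \<rho>f -` {..c0}"
    have Sne: "S \<noteq> {}" using y1 by (auto simp: S_def)
    have Sbdd: "bdd_above S" by (rule bdd_aboveI[of _ L]) (auto simp: S_def)
    have Scl: "closed S" unfolding S_def
      by (rule continuous_closed_preimage[OF c\<rho>]) auto
    define s where "s = Sup S"
    have sS: "s \<in> S" unfolding s_def by (rule closed_contains_Sup[OF Sne Sbdd Scl])
    hence s: "0 \<le> s" "s \<le> L" "\<rho>f s \<le> c0" by (auto simp: S_def)
    have sL: "s < L" using s \<rho>Lc by (cases "s = L") auto
    have above: "c0 < \<rho>f y" if "s < y" "y \<le> L" for y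
    proof (rule ccontr)
      assume "\<not> c0 < \<rho>f y"
      hence "y \<in> S" using that s by (auto simp: S_def)
      hence "y \<le> s" unfolding s_def by (rule cSup_upper[OF _ Sbdd])
      thus False using that by simp
    qed
    have "continuous_on {s..L} \<rho>f" using c\<rho> s by (elim continuous_on_subset) auto
    moreover have "\<And>x. s < x \<Longrightarrow> x < L \<Longrightarrow> (\<rho>f has_real_derivative ?N x) (at x)"
      using d\<rho>i s by simp
    ultimately obtain z where z: "s < z" "z < L" "\<rho>f L - \<rho>f s = (L - s) * ?N z"
      using mvt_at[of s L \<rho>f ?N] sL by blast
    have "?N z < 0" using key[of z] above[of z] z s by simp
    hence "(L - s) * ?N z < 0" using sL by (simp add: mult_pos_neg)
    thus False using z s \<rho>Lc by simp
  qed
  have decr: "\<rho>f y < \<rho>f x" if xy: "x \<in> {0..L}" "y \<in> {0..L}" "x < y" for x y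
  proof -
    have "continuous_on {x..y} \<rho>f" using c\<rho> xy by (elim continuous_on_subset) auto
    moreover have "\<And>t. x < t \<Longrightarrow> t < y \<Longrightarrow> (\<rho>f has_real_derivative ?N t) (at t)"
      using d\<rho>i xy by simp
    ultimately obtain z where z: "x < z" "z < y" "\<rho>f y - \<rho>f x = (y - x) * ?N z"
      using mvt_at[of x y \<rho>f ?N] xy by blast
    have "?N z < 0" using key[of z] gt z xy by simp
    hence "(y - x) * ?N z < 0" using xy by (simp add: mult_pos_neg)
    thus ?thesis using z by simp
  qed
  have rpos: "\<forall>y\<in>{0..L}. 0 < \<rho>f y" using gt c0 by (meson less_trans)
  show ?thesis
  proof
    show "\<forall>y\<in>{0..L}. 0 < velocity mc Ac \<rho>f y"
      using rpos pos by (simp add: velocity_def)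
    show "strict_mono_on {0..L} (velocity mc Ac \<rho>f)"
    proof (rule strict_mono_onI)
      fix x y assume xy: "x \<in> {0..L}" "y \<in> {0..L}" "x < y"
      have "Ac * \<rho>f y < Ac * \<rho>f x" using decr[OF xy] pos by simp
      moreover have "0 < (Ac * \<rho>f x) * (Ac * \<rho>f y)" using rpos xy pos by simp
      ultimately show "velocity mc Ac \<rho>f x < velocity mc Ac \<rho>f y"
        unfolding velocity_def using pos by (intro divide_strict_left_mono) auto
    qed
  qed
qed
end
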